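(* Consider $m$-th B-spline boosted quantum phase estimation with $l$ ancilla qubits, as described in the context, applied to an eigenstate of $U$ with phase parameter $E$. For a target failure probability $\delta\in(0,1)$ and a target (normalised) confidence-interval width $\epsilon\in(0,1)$, take the B-spline order $m = O(\log \frac{1}{\delta})$. Then the probability of measuring an outcome outside a normalised confidence interval of width $\epsilon$ around the true phase is at most $\delta$ provided the number of ancilla qubits is $l = O\left(\log \frac{1}{\epsilon} + \log\log \frac{1}{\delta}\right)$.
   Context: Quantum phase estimation (QPE): let $U$ be a unitary and $\ket{\psi}$ an eigenstate of $U$. With $l$ ancilla qubits whose basis states are labelled by integers $x\in\{-2^{l-1}+1,\dots,2^{l-1}\}$, one prepares a "window state" $\frac{1}{\tilde{\mathcal N}}\sum_x w(x)\ket{x}$ on the ancillas, applies $U^x$ to $\ket{\psi}$ controlled on the ancilla value $x$ (producing a phase $e^{iEx}$, where $E$ is the eigenphase in units of the ancilla grid), then applies the inverse quantum Fourier transform to the ancillas and measures them, obtaining an integer $k$ as an estimate of $E$. For the $m$-th B-spline window (the $m$-fold self-convolution of the rectangular function, a piecewise polynomial of degree $m-1$ with $m$ pieces, suitably rescaled to the ancilla grid), the resulting post-QPE ancilla state is $\frac{1}{\mathcal N}\sum_{k=-2^{l-1}+1}^{2^{l-1}} \left(\frac{\sin\frac{(k-E)\pi}{m}}{\frac{(k-E)\pi}{m}}\right)^m\ket{k}\ket{\psi}$, with $\mathcal N$ the normalising constant. The tail probability $\delta$ is the probability of measuring $k$ with $|k-E|>m$, i.e. outside the confidence interval $E\pm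 m$; in normalised units (dividing by $2^l$) this confidence interval has width $\epsilon = 2m/2^l$. *)

theory Defs
  imports Complex_Main
begin

definition sinc :: "real \<Rightarrow> real" where
  "sinc x = (if x = 0 then 1 else sin x / x)"

definition qpe_grid :: "nat \<Rightarrow> int set" where
  "qpe_grid l = {- (2 ^ (l - 1)) + 1 .. 2 ^ (l - 1)}"

text \<open>Unnormalised amplitude of outcome k after m-th B-spline boosted QPE.\<close>
definition bspline_amp :: "nat \<Rightarrow> real \<Rightarrow> int \<Rightarrow> real" where
  "bspline_amp m E k = (sinc ((real_of_int k - E) * pi / real m)) ^ m"

definition bspline_prob :: "nat \<Rightarrow> nat \<Rightarrow> real \<Rightarrow> int \<Rightarrow> real" where
  "bspline_prob l m E k =
     (bspline_amp m E k)\<^sup>2 / (\<Sum>j\<in>qpe_grid l. (bspline_amp m E j)\<^sup>2)"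

definition bspline_fail_prob :: "nat \<Rightarrow> nat \<Rightarrow> real \<Rightarrow> real \<Rightarrow> real" where
  "bspline_fail_prob l m E eps =
     (\<Sum>k\<in>{k\<in>qpe_grid l. \<bar>real_of_int k - E\<bar> / 2 ^ l > eps / 2}. bspline_prob l m E k)"

end

theory Submission imports Defs "HOL-Analysis.Complex_Transcendental" begin
lemma sin_cubic: fixes x::real shows "\<bar>sin x - x\<bar> \<le> \<bar>x\<bar>^3 / 6"
proof -
  have "\<bar>sin x - (\<Sum>m<3. sin_coeff m * x ^ m)\<bar> \<le> inverse (fact 3) * \<bar>x\<bar> ^ 3"
    by (rule Maclaurin_sin_bound)
  moreover have "(\<Sum>m<3. sin_coeff m * x ^ m) = x"
    by (simp add: numeral_3_eq_3 sin_coeff_def)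
  moreover have "(fact 3::real) = 6" by (simp add: numeral_3_eq_3)
  ultimately have "\<bar>sin x - x\<bar> \<le> inverse 6 * \<bar>x\<bar>^3" by (simp only:)
  also have "inverse 6 * \<bar>x\<bar>^3 = \<bar>x\<bar>^3 / 6" by (metis divide_inverse mult.commute)
  finally show ?thesis .
qed

lemma sinc_lower: assumes "\<bar>y\<bar> \<le> 1" shows "sinc y \<ge> 1/2"
proof (cases "y = 0")
  case True then show ?thesis by (simp add: sinc_def)
next
  case False
  have c: "\<bar>sin y - y\<bar> \<le> \<bar>y\<bar>^3/6" by (rule sin_cubic)
  have "\<bar>y\<bar>^3 \<le> \<bar>y\<bar>" proof -
    have "\<bar>y\<bar>*\<bar>y\<bar> \<le> 1" by (rule mult_le_one) (use assms in auto)
    then have "\<bar>y\<bar>*(\<bar>y\<bar>*\<bar>y\<bar>) \<le> \<bar>y\<bar>" by (simp add: mult_left_le)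
    then show ?thesis by (simp add: power3_eq_cube)
  qed
  show ?thesis
  proof (cases "y > 0")
    case True
    have "sin y \<ge> y/2" using c \<open>\<bar>y\<bar>^3 \<le> \<bar>y\<bar>\<close> True abs_le_D2[OF c] by (simp add: abs_of_pos)
    then show ?thesis using True by (simp add: sinc_def field_simps)
  next
    case f: False
    then have "y < 0" using False by auto
    have "sin y \<le> y/2" using c \<open>\<bar>y\<bar>^3 \<le> \<bar>y\<bar>\<close> \<open>y<0\<close> abs_le_D1[OF c] by (simp add: abs_of_neg)
    then show ?thesis using \<open>y<0\<close> by (simp add: sinc_def field_simps)
  qed
qed

lemma tele: fixes N::nat and c::real assumes "c > 0"
  shows "(\<Sum>n<N. 1/((c+n)*(c+n+1))) = 1/c - 1/(c+N)"
proof (induction N)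
  case 0 then show ?case by simp
next
  case (Suc N)
  have "c + N > 0" using assms by simp
  then have k: "1/(c+N) - 1/((c+N)*(c+N+1)) = 1/(c + real (Suc N))"
  proof -
    define a where "a = c + N"
    have "a > 0" using \<open>c + N > 0\<close> a_def by simp
    moreover have "a + a*a > 0" using \<open>a>0\<close> by (simp add: add_pos_pos)
    ultimately have "1/a - 1/(a*(a+1)) = 1/(a+1)" by (simp add: field_simps)
    then show ?thesis by (simp add: a_def add.assoc)
  qed
  show ?case using Suc k by simp
qed
lemma tail:
  fixes S :: "int set" and E M :: real
  assumes fin: "finite S" and M: "M > 1" and S: "\<forall>k\<in>S. real_of_int k - E > M"
  shows "(\<Sum>k\<in>S. 1/(real_of_int k - E)^2) \<le> 1/(M-1)"
proof -
  define a where "a = \<lfloor>E + M\<rfloor> + 1"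
  define c where "c = real_of_int a - E - 1"
  have aE: "real_of_int a > E + M" unfolding a_def by linarith
  have c: "c > M - 1" using aE c_def by simp
  have cpos: "c > 0" using c M by simp
  have ka: "k \<ge> a" if "k \<in> S" for k
  proof -
    have "real_of_int k > E + M" using S that by auto
    then show ?thesis unfolding a_def by linarith
  qed
  define f where "f = (\<lambda>k::int. 1/(real_of_int k - E)^2)"
  define g where "g = (\<lambda>k::int. nat (k - a))"
  have inj: "inj_on g S" unfolding g_def inj_on_def
  proof (intro ballI impI)
    fix x y assume "x \<in> S" "y \<in> S" "nat (x - a) = nat (y - a)"
    with ka[of x] ka[of y] show "x = y" by linarith
  qed
  have "(\<Sum>k\<in>S. f k) = (\<Sum>k\<in>S. f (a + int (g k)))"
    by (rule sum.cong) (auto simp: g_def ka)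
  also have "\<dots> = (\<Sum>n\<in>g ` S. f (a + int n))"
    by (rule sum.reindex[OF inj, symmetric, unfolded comp_def])
  also obtain N where N: "g ` S \<subseteq> {..<N}"
    using finite_imageI[OF fin, of g] by (auto simp: finite_nat_set_iff_bounded)
  then have "(\<Sum>n\<in>g ` S. f (a + int n)) \<le> (\<Sum>n<N. f (a + int n))"
    by (intro sum_mono2) (auto simp: f_def)
  also have "\<dots> \<le> (\<Sum>n<N. 1/((c+n)*(c+n+1)))"
  proof (rule sum_mono)
    fix n assume "n \<in> {..<N}"
    have e: "real_of_int (a + int n) - E = c + n + 1" by (simp add: c_def)
    have p: "c + n > 0" using cpos by simp
    have "(c+n)*(c+n+1) \<le> (c+n+1)^2" using p by (simp add: power2_eq_square mult_right_mono)
    moreover have "(c+n)*(c+n+1) > 0" using p by simp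
    moreover have "(c+n+1)^2 > 0" using p by simp
    ultimately have "1/(c+n+1)^2 \<le> 1/((c+n)*(c+n+1))"
      by (intro divide_left_mono) (auto simp del: zero_less_mult_iff)
    then show "f (a + int n) \<le> 1/((c+n)*(c+n+1))" unfolding f_def e .
  qed
  also have "\<dots> = 1/c - 1/(c+N)" by (rule tele[OF cpos])
  also have "\<dots> \<le> 1/c" using cpos by simp
  also have "\<dots> \<le> 1/(M-1)" using c M by (intro divide_left_mono) auto
  finally show ?thesis unfolding f_def .
qed

lemma amp_upper:
  assumes m1: "m \<ge> 1" and dk: "\<bar>real_of_int k - E\<bar> > real m"
  shows "(bspline_amp m E k)^2 \<le> (1/pi)^(2*m) * (real m^2 / (real_of_int k - E)^2)"
proof -
  define d where "d = real_of_int k - E"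
  define x where "x = d * pi / real m"
  define t where "t = real m^2 / d^2"
  have mpos: "real m > 0" using m1 by simp
  have d0: "d \<noteq> 0" using dk mpos d_def by auto
  have x0: "x \<noteq> 0" using d0 mpos by (simp add: x_def)
  have s2: "(sin x)^2 \<le> 1" using abs_sin_le_one[of x] abs_square_le_1[of "sin x"] by blast
  have sx: "(sinc x)^2 \<le> 1/x^2"
    using x0 s2 by (simp add: sinc_def power_divide divide_right_mono)
  have tx: "1/x^2 = (1/pi)^2 * t"
  proof -
    have "x^2 = (d*pi)^2 / (real m)^2" by (simp add: x_def power_divide)
    then have "1/x^2 = (real m)^2 / (d*pi)^2" by simp
    also have "\<dots> = (1/pi)^2 * ((real m)^2 / d^2)" by (simp add: power_mult_distrib power_one_over)
    finally show ?thesis by (simp add: t_def)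
  qed
  have t0: "t \<ge> 0" by (simp add: t_def)
  have "(real m)^2 < \<bar>d\<bar>^2" using dk mpos d_def by (intro power_strict_mono) auto
  then have "d^2 > (real m)^2" by simp
  then have t1: "t \<le> 1" using d0 by (simp add: t_def)
  have "bspline_amp m E k = (sinc x)^m" by (simp add: bspline_amp_def x_def d_def)
  then have "(bspline_amp m E k)^2 = ((sinc x)^2)^m"
    by (simp only: power_mult[symmetric] mult.commute)
  also have "\<dots> \<le> ((1/pi)^2 * t)^m"
    using sx tx by (intro power_mono) auto
  also have "\<dots> = (1/pi)^(2*m) * t^m" by (simp add: power_mult_distrib power_mult)
  also have "\<dots> \<le> (1/pi)^(2*m) * t"
    using power_decreasing[of 1 m t] t0 t1 m1 by (intro mult_left_mono) auto
  finally show ?thesis by (simp add: t_def d_def)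
qed

lemma finite_grid: "finite (qpe_grid l)" by (simp add: qpe_grid_def)

lemma inv_sq_sum:
  assumes m: "m \<ge> 2" and fin: "finite T"
    and T: "\<forall>k\<in>T. \<bar>real_of_int k - E\<bar> > real m"
  shows "(\<Sum>k\<in>T. 1/(real_of_int k - E)^2) \<le> 2/(real m - 1)"
proof -
  define Tp where "Tp = {k\<in>T. real_of_int k - E > real m}"
  define Tn where "Tn = {k\<in>T. E - real_of_int k > real m}"
  have M: "real m > 1" using m by simp
  have TU: "T = Tp \<union> Tn" using T unfolding Tp_def Tn_def by (auto simp: abs_if split: if_splits)
  have disj: "Tp \<inter> Tn = {}" unfolding Tp_def Tn_def using M by auto
  have fp: "finite Tp" "finite Tn" using fin by (auto simp: Tp_def Tn_def)
  have "(\<Sum>k\<in>T. 1/(real_of_int k - E)^2) = (\<Sum>k\<in>Tp. 1/(real_of_int k - E)^2) + (\<Sum>k\<in>Tn. 1/(real_of_int k - E)^2)"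
    unfolding TU by (rule sum.union_disjoint[OF fp disj])
  also have "(\<Sum>k\<in>Tp. 1/(real_of_int k - E)^2) \<le> 1/(real m - 1)"
    by (rule tail[OF fp(1) M]) (auto simp: Tp_def)
  also have "(\<Sum>k\<in>Tn. 1/(real_of_int k - E)^2) = (\<Sum>j\<in>uminus ` Tn. 1/(real_of_int j - (-E))^2)"
  proof -
    have "(\<Sum>j\<in>uminus ` Tn. 1/(real_of_int j - (-E))^2) = (\<Sum>k\<in>Tn. 1/(real_of_int (-k) - (-E))^2)"
      by (subst sum.reindex) (auto simp: inj_on_def)
    also have "\<dots> = (\<Sum>k\<in>Tn. 1/(real_of_int k - E)^2)"
      by (rule sum.cong) (auto simp: power2_commute)
    finally show ?thesis by simp
  qed
  also have "\<dots> \<le> 1/(real m - 1)"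
    by (rule tail[OF _ M]) (use fp(2) in \<open>auto simp: Tn_def\<close>)
  finally show ?thesis by simp
qed

lemma num_bound:
  assumes m: "m \<ge> 2"
  shows "(\<Sum>k\<in>{k\<in>qpe_grid l. \<bar>real_of_int k - E\<bar> > real m}. (bspline_amp m E k)^2)
         \<le> 4 * real m * (1/pi)^(2*m)"
proof -
  define T where "T = {k\<in>qpe_grid l. \<bar>real_of_int k - E\<bar> > real m}"
  have fin: "finite T" using finite_grid by (simp add: T_def)
  have TT: "\<forall>k\<in>T. \<bar>real_of_int k - E\<bar> > real m" by (simp add: T_def)
  have "(\<Sum>k\<in>T. (bspline_amp m E k)^2) \<le> (\<Sum>k\<in>T. (1/pi)^(2*m) * (real m^2 / (real_of_int k - E)^2))"
    by (rule sum_mono, rule amp_upper) (use m TT in auto)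
  also have "\<dots> = (1/pi)^(2*m) * real m^2 * (\<Sum>k\<in>T. 1/(real_of_int k - E)^2)"
    by (simp add: sum_distrib_left)
  also have "\<dots> \<le> (1/pi)^(2*m) * real m^2 * (2/(real m - 1))"
    by (rule mult_left_mono[OF inv_sq_sum[OF m fin TT]]) simp
  also have "\<dots> \<le> (1/pi)^(2*m) * (4 * real m)"
  proof -
    have M: "real m \<ge> 2" using m by simp
    have "real m^2 * (2/(real m - 1)) \<le> 4 * real m"
      using M by (simp add: field_simps power2_eq_square)
    then have "(1/pi)^(2*m) * (real m^2 * (2/(real m - 1))) \<le> (1/pi)^(2*m) * (4 * real m)"
      by (rule mult_left_mono) simp
    then show ?thesis by (simp only: mult.assoc)
  qed
  finally show ?thesis by (simp add: T_def mult.commute mult.left_commute)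
qed

lemma den_bound:
  assumes m: "m \<ge> 2" and l: "l \<ge> 1"
    and E1: "- (2 ^ (l - 1)) + 1 \<le> E" and E2: "E \<le> 2 ^ (l - 1)"
  shows "(\<Sum>j\<in>qpe_grid l. (bspline_amp m E j)^2) \<ge> (1/4)^m"
proof -
  define k0 where "k0 = \<lfloor>E + 1/2\<rfloor>"
  have k0a: "real_of_int k0 \<le> E + 1/2" "real_of_int k0 > E - 1/2" unfolding k0_def by linarith+
  have "real_of_int (- (2 ^ (l - 1))) < real_of_int k0" using k0a E1 by simp
  then have "- (2 ^ (l - 1)) < k0" by (rule of_int_less_iff[THEN iffD1])
  then have g1: "k0 \<ge> - (2 ^ (l - 1)) + 1" by linarith
  have "real_of_int k0 < real_of_int (2 ^ (l - 1) + 1)" using k0a E2 by simp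
  then have "k0 < 2 ^ (l - 1) + 1" by (rule of_int_less_iff[THEN iffD1])
  then have g2: "k0 \<le> 2 ^ (l - 1)" by linarith
  have kin: "k0 \<in> qpe_grid l" using g1 g2 by (simp add: qpe_grid_def)
  define y where "y = (real_of_int k0 - E) * pi / real m"
  have mpos: "real m \<ge> 2" using m by simp
  have k0h: "\<bar>real_of_int k0 - E\<bar> \<le> 1/2" unfolding abs_le_iff using k0a by linarith
  have "\<bar>y\<bar> = \<bar>real_of_int k0 - E\<bar> * pi / real m" using mpos by (simp add: y_def abs_mult)
  also have "\<dots> \<le> (1/2) * pi / 2"
    using k0h mpos pi_gt_zero by (intro frac_le mult_right_mono) auto
  also have "\<dots> \<le> 1" using pi_less_4 by simp
  finally have "sinc y \<ge> 1/2" by (rule sinc_lower)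
  then have "(1/2::real)^2 \<le> (sinc y)^2" by (intro power_mono) auto
  then have "(1/4::real) \<le> (sinc y)^2" by (simp add: power2_eq_square)
  then have "(1/4::real)^m \<le> ((sinc y)^2)^m" by (intro power_mono) auto
  also have "\<dots> = (bspline_amp m E k0)^2"
  proof -
    have "bspline_amp m E k0 = (sinc y)^m" by (simp add: bspline_amp_def y_def)
    then show ?thesis by (simp only: power_mult[symmetric] mult.commute)
  qed
  also have "\<dots> \<le> (\<Sum>j\<in>qpe_grid l. (bspline_amp m E j)^2)"
    by (rule member_le_sum[OF kin]) (auto simp: finite_grid)
  finally show ?thesis .
qed

lemma fail_bound:
  fixes E eps :: real
  assumes m: "m \<ge> 2" and l: "l \<ge> 1"
    and E1: "- (2 ^ (l - 1)) + 1 \<le> E" and E2: "E \<le> 2 ^ (l - 1)"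
    and eps: "eps * 2^l / 2 \<ge> real m"
  shows "bspline_fail_prob l m E eps \<le> 4 * real m * (1/pi)^(2*m) * 4^m"
proof -
  define D where "D = (\<Sum>j\<in>qpe_grid l. (bspline_amp m E j)^2)"
  define F where "F = {k\<in>qpe_grid l. \<bar>real_of_int k - E\<bar> / 2 ^ l > eps / 2}"
  define T where "T = {k\<in>qpe_grid l. \<bar>real_of_int k - E\<bar> > real m}"
  have D: "D \<ge> (1/4)^m" unfolding D_def by (rule den_bound[OF m l E1 E2])
  have "(1/4::real)^m > 0" by simp
  then have Dpos: "D > 0" using D by linarith
  have FT: "F \<subseteq> T"
  proof
    fix k assume "k \<in> F"
    then have "\<bar>real_of_int k - E\<bar> / 2 ^ l > eps / 2" and kg: "k \<in> qpe_grid l" by (auto simp: F_def)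
    then have "\<bar>real_of_int k - E\<bar> > eps * 2^l / 2" by (simp add: field_simps)
    then show "k \<in> T" using eps kg by (simp add: T_def)
  qed
  have finT: "finite T" using finite_grid by (simp add: T_def)
  have "bspline_fail_prob l m E eps = (\<Sum>k\<in>F. (bspline_amp m E k)^2) / D"
    by (simp add: bspline_fail_prob_def bspline_prob_def F_def D_def sum_divide_distrib)
  also have "\<dots> \<le> (\<Sum>k\<in>T. (bspline_amp m E k)^2) / D"
    using Dpos by (intro divide_right_mono sum_mono2[OF finT FT]) auto
  also have "\<dots> \<le> (4 * real m * (1/pi)^(2*m)) / D"
    using Dpos num_bound[OF m, where l=l and E=E] by (intro divide_right_mono) (auto simp: T_def)
  also have "\<dots> \<le> (4 * real m * (1/pi)^(2*m)) / (1/4)^m"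
  proof -
    have "0 < D * (1/4)^m" using Dpos by simp
    then show ?thesis using D by (intro divide_left_mono) auto
  qed
  also have "\<dots> = 4 * real m * (1/pi)^(2*m) * 4^m" by (simp add: power_one_over)
  finally show ?thesis .
qed

lemma numeric:
  assumes d: "0 < \<delta>" "\<delta> < 1" and mL: "real m \<ge> 16 * (1 + ln (1/\<delta>))"
  shows "4 * real m * (1/pi)^(2*m) * 4^m \<le> \<delta>"
proof -
  define L where "L = ln (1/\<delta>)"
  have eL: "exp (-L) = \<delta>" using d by (simp add: L_def ln_div)
  have L0: "L \<ge> 0" using d by (simp add: L_def)
  have "3 * 3 \<le> pi * pi" using pi_gt3 by (intro mult_mono) auto
  then have "pi^2 \<ge> 8" by (simp add: power2_eq_square)
  then have p: "(1/pi)^2 * 4 \<le> (1/2::real)" by (simp add: power_one_over field_simps)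
  have "(1/pi)^(2*m) * 4^m = ((1/pi)^2 * 4)^m" by (simp add: power_mult power_mult_distrib)
  also have "\<dots> \<le> (1/2)^m" using p by (intro power_mono) auto
  finally have a: "(1/pi)^(2*m) * 4^m \<le> (1/2::real)^m" .
  have e12: "exp (1/2) \<le> (2::real)"
  proof -
    have "exp (1/2) ^ 2 = exp (1::real)" by (simp add: power2_eq_square exp_add[symmetric])
    also have "\<dots> \<le> 2^2" using exp_le by simp
    finally show ?thesis by (rule power2_le_imp_le) simp
  qed
  have "exp (real m / 2) = exp (1/2) ^ m" by (simp add: exp_of_nat_mult[symmetric])
  also have "\<dots> \<le> 2 ^ m" using e12 by (intro power_mono) auto
  finally have b: "(1/2::real)^m \<le> 1 / exp (real m / 2)" by (simp add: power_one_over field_simps)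
  have c: "real m \<le> 4 * exp (real m / 4)"
    using exp_ge_add_one_self[of "real m / 4"] by linarith
  have "4 * real m * (1/pi)^(2*m) * 4^m \<le> 4 * real m * (1/2)^m"
    using a by (simp add: mult.assoc mult_left_mono)
  also have "\<dots> \<le> 4 * (4 * exp (real m / 4)) * (1 / exp (real m / 2))"
    using b c by (intro mult_mono) auto
  also have "\<dots> = 16 * exp (- (real m / 4))"
  proof -
    have "exp (real m / 2) = exp (real m / 4) * exp (real m / 4)" by (simp add: exp_add[symmetric])
    then show ?thesis by (simp add: exp_minus field_simps)
  qed
  also have "\<dots> \<le> 16 * exp (-4 - L)" using mL L0 by (simp add: L_def)
  also have "\<dots> = 16 * exp (-4) * \<delta>" using eL by (simp add: exp_diff exp_minus field_simps)
  also have "\<dots> \<le> \<delta>"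
  proof -
    have "exp (1::real) \<ge> 2" using exp_ge_add_one_self[of 1] by simp
    then have "exp (1::real) ^ 4 \<ge> 2^4" by (intro power_mono) auto
    moreover have "exp (4::real) = exp 1 ^ 4" by (simp add: exp_of_nat_mult[symmetric])
    ultimately have "exp (4::real) \<ge> 16" by simp
    then have "16 * exp (-4) \<le> (1::real)" by (simp add: exp_minus field_simps)
    then show ?thesis using d by (simp add: mult_left_le_one_le)
  qed
  finally show ?thesis .
qed

lemma ln2_half: "ln (2::real) \<ge> 1/2"
proof -
  have "exp (1/2) ^ 2 = exp (1::real)" by (simp add: power2_eq_square exp_add[symmetric])
  also have "\<dots> \<le> 2^2" using exp_le by simp
  finally have "exp (1/2) \<le> (2::real)" by (rule power2_le_imp_le) simp
  then have "ln (exp (1/2)) \<le> ln (2::real)" by (subst ln_le_cancel_iff) auto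
  then show ?thesis by simp
qed

theorem theorem1:
  shows "\<exists>C1 C2 :: real. C1 > 0 \<and> C2 > 0 \<and>
    (\<forall>\<delta> :: real. 0 < \<delta> \<and> \<delta> < 1 \<longrightarrow>
      (\<exists>m :: nat. 1 \<le> m \<and> real m \<le> C1 * (1 + ln (1 / \<delta>)) \<and>
        (\<forall>\<epsilon> :: real. 0 < \<epsilon> \<and> \<epsilon> < 1 \<longrightarrow>
          (\<exists>L0 :: nat. real L0 \<le> C2 * (1 + ln (1 / \<epsilon>) + ln (1 + ln (1 / \<delta>))) \<and>
            (\<forall>l :: nat. L0 \<le> l \<longrightarrow> 1 \<le> l \<longrightarrow>
              (\<forall>E :: real. - (2 ^ (l - 1)) + 1 \<le> E \<and> E \<le> 2 ^ (l - 1) \<longrightarrow>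
                 bspline_fail_prob l m E \<epsilon> \<le> \<delta>))))))"
proof (rule exI[of _ 17], rule exI[of _ 7], intro conjI allI impI)
  fix \<delta> :: real assume d: "0 < \<delta> \<and> \<delta> < 1"
  define L where "L = ln (1/\<delta>)"
  have L0: "L \<ge> 0" using d by (simp add: L_def)
  define m where "m = nat \<lceil>16 * (1 + L)\<rceil>"
  have m1: "real m \<ge> 16 * (1 + L)" unfolding m_def by linarith
  have m2: "real m \<le> 16 * (1 + L) + 1"
  proof -
    have "\<lceil>16 * (1 + L)\<rceil> \<ge> 0" using L0 by simp
    then have "real m = real_of_int \<lceil>16 * (1 + L)\<rceil>" by (simp add: m_def)
    then show ?thesis using of_int_ceiling_le_add_one[of "16 * (1 + L)"] by linarith
  qed
  have "16 * (1 + L) \<ge> 16" using L0 by simp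
  then have "real m \<ge> 16" using m1 by linarith
  then have m16: "m \<ge> 16" by simp
  show "\<exists>m :: nat. 1 \<le> m \<and> real m \<le> 17 * (1 + ln (1 / \<delta>)) \<and>
        (\<forall>\<epsilon> :: real. 0 < \<epsilon> \<and> \<epsilon> < 1 \<longrightarrow>
          (\<exists>L0 :: nat. real L0 \<le> 7 * (1 + ln (1 / \<epsilon>) + ln (1 + ln (1 / \<delta>))) \<and>
            (\<forall>l :: nat. L0 \<le> l \<longrightarrow> 1 \<le> l \<longrightarrow>
              (\<forall>E :: real. - (2 ^ (l - 1)) + 1 \<le> E \<and> E \<le> 2 ^ (l - 1) \<longrightarrow>
                 bspline_fail_prob l m E \<epsilon> \<le> \<delta>))))"
  proof (rule exI[of _ m], intro conjI allI impI)
    show "1 \<le> m" using m16 by simp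
    show "real m \<le> 17 * (1 + ln (1 / \<delta>))" using m2 L0 by (simp add: L_def)
    fix \<epsilon> :: real assume e: "0 < \<epsilon> \<and> \<epsilon> < 1"
    define X where "X = 2 * real m / \<epsilon>"
    have mpos: "real m > 0" using m16 by simp
    have X1: "X > 1" using e m16 by (simp add: X_def field_simps)
    define L0 where "L0 = nat \<lceil>log 2 X\<rceil>"
    have lX: "log 2 X > 0" using X1 by simp
    have L0a: "real L0 \<le> log 2 X + 1"
    proof -
      have "\<lceil>log 2 X\<rceil> \<ge> 0" using lX by simp
      then have "real L0 = real_of_int \<lceil>log 2 X\<rceil>" by (simp add: L0_def)
      then show ?thesis using of_int_ceiling_le_add_one[of "log 2 X"] by linarith
    qed
    have L0b: "real L0 \<ge> log 2 X" unfolding L0_def by linarith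
    define R where "R = ln (1 + L) + ln (1/\<epsilon>)"
    have R0: "R \<ge> 0" using L0 e by (simp add: R_def)
    have ln2: "ln (2::real) \<ge> 1/2" by (rule ln2_half)
    have "ln (real m) \<le> ln (32 * (1 + L))"
      using m2 L0 mpos by (subst ln_le_cancel_iff) auto
    also have "\<dots> = 5 * ln 2 + ln (1 + L)"
    proof -
      have "ln (32 * (1+L)) = ln 32 + ln (1+L)" by (rule ln_mult_pos) (use L0 in auto)
      moreover have "ln (32::real) = 5 * ln 2" using ln_realpow[of "2::real" 5] by simp
      ultimately show ?thesis by simp
    qed
    finally have lm: "ln (real m) \<le> 5 * ln 2 + ln (1 + L)" .
    have "ln X = ln 2 + ln (real m) + ln (1/\<epsilon>)"
      using e mpos by (simp add: X_def ln_mult ln_div)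
    also have "\<dots> \<le> 6 * ln 2 + R" using lm by (simp add: R_def)
    finally have lnX: "ln X \<le> 6 * ln 2 + R" .
    have "log 2 X = ln X / ln 2" by (simp add: log_def)
    also have "\<dots> \<le> (6 * ln 2 + R) / ln 2" using lnX ln2 by (intro divide_right_mono) auto
    also have "\<dots> = 6 + R / ln 2" using ln2 by (simp add: field_simps)
    also have "\<dots> \<le> 6 + 2 * R"
    proof -
      have "R / ln 2 \<le> R / (1/2)" using ln2 R0 by (intro divide_left_mono) auto
      then show ?thesis by simp
    qed
    finally have lg: "log 2 X \<le> 6 + 2 * R" .
    show "\<exists>L0 :: nat. real L0 \<le> 7 * (1 + ln (1 / \<epsilon>) + ln (1 + ln (1 / \<delta>))) \<and>
            (\<forall>l :: nat. L0 \<le> l \<longrightarrow> 1 \<le> l \<longrightarrow>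
              (\<forall>E :: real. - (2 ^ (l - 1)) + 1 \<le> E \<and> E \<le> 2 ^ (l - 1) \<longrightarrow>
                 bspline_fail_prob l m E \<epsilon> \<le> \<delta>))"
    proof (rule exI[of _ L0], intro conjI allI impI)
      show "real L0 \<le> 7 * (1 + ln (1 / \<epsilon>) + ln (1 + ln (1 / \<delta>)))"
        using L0a R0 lg by (simp add: R_def L_def)
    next
      fix l :: nat and E :: real
      assume l0: "L0 \<le> l" and l1: "1 \<le> l" and E: "- (2 ^ (l - 1)) + 1 \<le> E \<and> E \<le> 2 ^ (l - 1)"
      have "X = 2 powr (log 2 X)" using X1 by simp
      also have "\<dots> \<le> 2 powr (real L0)" using L0b by simp
      also have "\<dots> = 2 ^ L0" by (simp add: powr_realpow)
      also have "\<dots> \<le> 2 ^ l" using l0 by (simp add: power_increasing)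
      finally have "X \<le> 2 ^ l" .
      then have eps: "\<epsilon> * 2 ^ l / 2 \<ge> real m" using e by (simp add: X_def field_simps)
      have "bspline_fail_prob l m E \<epsilon> \<le> 4 * real m * (1/pi)^(2*m) * 4^m"
        using fail_bound[of m l E \<epsilon>] m16 l1 E eps by auto
      also have "\<dots> \<le> \<delta>" using numeric[of \<delta> m] d m1 by (simp add: L_def)
      finally show "bspline_fail_prob l m E \<epsilon> \<le> \<delta>" .
    qed
  qed
qed (auto)

end
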